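(* Let $F$ be WORDER or WMAJORITY. During a run of (1+1) GP-single on MO-$F$, let $s$ be the number of leaves of the current tree and $k$ the number of expressed variables of the current tree. Then $F$ of the current tree never decreases and the quantity $s-k$ never increases from one iteration to the next. In particular, once the current tree is non-redundant, it stays non-redundant for the rest of the run.
   Context: Fix an integer $n\ge 1$ and real weights $w_1\ge w_2\ge\dots\ge w_n>0$. The terminal set is $T=\{x_1,\bar x_1,\dots,x_n,\bar x_n\}$ ($\bar x_i$ is the complement of $x_i$; $x_i$ is called positive). A syntax tree is either the empty tree or a rooted ordered binary tree whose inner nodes are all labelled by the binary function $J$ (join, exactly two ordered children) and whose leaves are labelled by elements of $T$. The complexity $C(X)$ is the number of nodes of $X$ (0 for the empty tree). The leaf list $l$ of $X$ is the sequence of leaf labels in an inorder traversal. WORDER: build a list $S$ by scanning $l$ from front to rear and appending a literal only if neither it nor its complement is already in $S$; WORDER$(X)=\sum_{i:\,x_i\in S} w_i$; here $x_i$ is expressed iff $x_i\in S$. WMAJORITY: WMAJORITY$(X)=\sum w_i$ over all $i$ such that $x_i$ occurs in $l$ at least once and at least as often as $\bar x_i$; these $x_i$ are the expressed variables. A tree is non-redundant if it is empty or if, with $k$ its number of expressed variables, its complexity is $2k-1$. MO-$F(X)=(F(X),C(X))$, $F$ maximized and $C$ minimized. Mutation (HVL-Prime applied $k$ times): each application chooses uniformly at random one of three operations. Substitute: replace a uniformly random leaf by a uniformly random $u\in T$. Insert: choose a uniformly random node $v$ and uniformly random $u\in T$, replace $v$ by a $J$-node with children $u$ and $v$ in uniformly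 random order (inserting into the empty tree yields the single leaf $u$). Delete: choose a uniformly random leaf $v$ with parent $p$ and sibling $u$, replace $p$ by $u$ (deleting $p$ and $v$; deleting the only leaf of a one-leaf tree yields the empty tree). Single-operation mutation uses $k=1$. (1+1) GP-single on MO-$F$: start with an initial tree $X$; in each iteration let $Y$ be $X$ mutated with $k=1$, and set $X:=Y$ iff $F(Y)>F(X)$, or $F(Y)=F(X)$ and $C(Y)\le C(X)$. *)

theory Defs
  imports Complex_Main
begin

text \<open>Variables are indexed by 1..n. Pos i is x_i, Neg i is its complement.\<close>
datatype lit = Pos nat | Neg nat

fun var :: "lit \<Rightarrow> nat" where
  "var (Pos i) = i" | "var (Neg i) = i"

fun compl :: "lit \<Rightarrow> lit" where
  "compl (Pos i) = Neg i" | "compl (Neg i) = Pos i"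

definition terminals :: "nat \<Rightarrow> lit set" where
  "terminals n = {Pos i | i. i \<in> {1..n}} \<union> {Neg i | i. i \<in> {1..n}}"

text \<open>Non-empty trees: leaves labelled by literals, inner nodes are J with two ordered children.
  A syntax tree is a btree option, None being the empty tree.\<close>
datatype btree = Leaf lit | Join btree btree

type_synonym tree = "btree option"

fun leaves :: "btree \<Rightarrow> lit list" where
  "leaves (Leaf a) = [a]"
| "leaves (Join l r) = leaves l @ leaves r"

definition leaf_list :: "tree \<Rightarrow> lit list" where
  "leaf_list X = (case X of None \<Rightarrow> [] | Some t \<Rightarrow> leaves t)"

fun bsize :: "btree \<Rightarrow> nat" where
  "bsize (Leaf a) = 1"
| "bsize (Join l r) = 1 + bsize l + bsize r"

definition complexity :: "tree \<Rightarrow> nat" where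
  "complexity X = (case X of None \<Rightarrow> 0 | Some t \<Rightarrow> bsize t)"

definition num_leaves :: "tree \<Rightarrow> nat" where
  "num_leaves X = length (leaf_list X)"

definition valid_tree :: "nat \<Rightarrow> tree \<Rightarrow> bool" where
  "valid_tree n X \<longleftrightarrow> set (leaf_list X) \<subseteq> terminals n"

fun worder_scan :: "lit list \<Rightarrow> lit list \<Rightarrow> lit list" where
  "worder_scan S [] = S"
| "worder_scan S (x # xs) =
     (if x \<in> set S \<or> compl x \<in> set S then worder_scan S xs else worder_scan (S @ [x]) xs)"

definition worder_expressed :: "nat \<Rightarrow> tree \<Rightarrow> nat set" where
  "worder_expressed n X = {i \<in> {1..n}. Pos i \<in> set (worder_scan [] (leaf_list X))}"

definition wmajority_expressed :: "nat \<Rightarrow> tree \<Rightarrow> nat set" where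
  "wmajority_expressed n X = {i \<in> {1..n}. count_list (leaf_list X) (Pos i) \<ge> 1 \<and>
       count_list (leaf_list X) (Pos i) \<ge> count_list (leaf_list X) (Neg i)}"

datatype problem = WORDER | WMAJORITY

definition expressed :: "problem \<Rightarrow> nat \<Rightarrow> tree \<Rightarrow> nat set" where
  "expressed P n X = (case P of WORDER \<Rightarrow> worder_expressed n X | WMAJORITY \<Rightarrow> wmajority_expressed n X)"

definition fitness :: "problem \<Rightarrow> nat \<Rightarrow> (nat \<Rightarrow> real) \<Rightarrow> tree \<Rightarrow> real" where
  "fitness P n w X = (\<Sum>i \<in> expressed P n X. w i)"

definition non_redundant :: "problem \<Rightarrow> nat \<Rightarrow> tree \<Rightarrow> bool" where
  "non_redundant P n X \<longleftrightarrow> X = None \<or>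
     int (complexity X) = 2 * int (card (expressed P n X)) - 1"

inductive subst_b :: "nat \<Rightarrow> btree \<Rightarrow> btree \<Rightarrow> bool" for n where
  "u \<in> terminals n \<Longrightarrow> subst_b n (Leaf a) (Leaf u)"
| "subst_b n l l' \<Longrightarrow> subst_b n (Join l r) (Join l' r)"
| "subst_b n r r' \<Longrightarrow> subst_b n (Join l r) (Join l r')"

inductive insert_b :: "nat \<Rightarrow> btree \<Rightarrow> btree \<Rightarrow> bool" for n where
  "u \<in> terminals n \<Longrightarrow> insert_b n v (Join (Leaf u) v)"
| "u \<in> terminals n \<Longrightarrow> insert_b n v (Join v (Leaf u))"
| "insert_b n l l' \<Longrightarrow> insert_b n (Join l r) (Join l' r)"
| "insert_b n r r' \<Longrightarrow> insert_b n (Join l r) (Join l r')"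

inductive delete_b :: "btree \<Rightarrow> btree \<Rightarrow> bool" where
  "delete_b (Join (Leaf a) r) r"
| "delete_b (Join l (Leaf a)) l"
| "delete_b l l' \<Longrightarrow> delete_b (Join l r) (Join l' r)"
| "delete_b r r' \<Longrightarrow> delete_b (Join l r) (Join l r')"

text \<open>One HVL-Prime application: Y is a possible outcome of mutating X.
  Substitution/deletion on the empty tree (no leaf to choose) leave it unchanged.\<close>
inductive mutate1 :: "nat \<Rightarrow> tree \<Rightarrow> tree \<Rightarrow> bool" for n where
  subst: "subst_b n t t' \<Longrightarrow> mutate1 n (Some t) (Some t')"
| ins: "insert_b n t t' \<Longrightarrow> mutate1 n (Some t) (Some t')"
| ins_empty: "u \<in> terminals n \<Longrightarrow> mutate1 n None (Some (Leaf u))"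
| del: "delete_b t t' \<Longrightarrow> mutate1 n (Some t) (Some t')"
| del_single: "mutate1 n (Some (Leaf a)) None"
| noop_empty: "mutate1 n None None"

definition accept :: "problem \<Rightarrow> nat \<Rightarrow> (nat \<Rightarrow> real) \<Rightarrow> tree \<Rightarrow> tree \<Rightarrow> bool" where
  "accept P n w X Y \<longleftrightarrow> fitness P n w Y > fitness P n w X \<or>
     (fitness P n w Y = fitness P n w X \<and> complexity Y \<le> complexity X)"

definition gp_step :: "problem \<Rightarrow> nat \<Rightarrow> (nat \<Rightarrow> real) \<Rightarrow> tree \<Rightarrow> tree \<Rightarrow> bool" where
  "gp_step P n w X X' \<longleftrightarrow> (\<exists>Y. mutate1 n X Y \<and> X' = (if accept P n w X Y then Y else X))"

end

theory Submission
  imports Defs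
begin

definition proj :: "nat \<Rightarrow> lit list \<Rightarrow> lit list" where
  "proj i l = filter (\<lambda>x. var x = i) l"

fun G :: "problem \<Rightarrow> nat \<Rightarrow> lit list \<Rightarrow> bool" where
  "G WORDER i q = (q \<noteq> [] \<and> hd q = Pos i)"
| "G WMAJORITY i q = (count_list q (Pos i) \<ge> 1 \<and> count_list q (Pos i) \<ge> count_list q (Neg i))"

definition Ex :: "problem \<Rightarrow> nat \<Rightarrow> lit list \<Rightarrow> nat set" where
  "Ex P n l = {i \<in> {1..n}. G P i (proj i l)}"

lemma var_eq_iff: "var y = var x \<longleftrightarrow> y = x \<or> y = compl x"
  by (cases x; cases y) auto

lemma mem_compl_iff: "(x \<in> set S \<or> compl x \<in> set S) \<longleftrightarrow> var x \<in> var ` set S"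
  using var_eq_iff by (auto simp: image_iff) (metis var_eq_iff)+

lemma worder_scan_char:
  "Pos i \<in> set (worder_scan S l) \<longleftrightarrow>
   (if i \<in> var ` set S then Pos i \<in> set S else proj i l \<noteq> [] \<and> hd (proj i l) = Pos i)"
proof (induction l arbitrary: S)
  case Nil
  then show ?case by (auto simp: proj_def image_iff)
next
  case (Cons x xs)
  show ?case
  proof (cases "var x \<in> var ` set S")
    case True
    then have "worder_scan S (x # xs) = worder_scan S xs" using mem_compl_iff by simp
    then show ?thesis using Cons True by (auto simp: proj_def)
  next
    case False
    then have "worder_scan S (x # xs) = worder_scan (S @ [x]) xs" using mem_compl_iff by auto
    then show ?thesis using Cons False
      by (cases x) (auto simp: proj_def image_iff)
  qed
qed

lemma count_proj: "var y = i \<Longrightarrow> count_list (proj i l) y = count_list l y"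
  by (induction l) (auto simp: proj_def)

lemma expressed_Ex: "expressed P n X = Ex P n (leaf_list X)"
  by (cases P) (auto simp: expressed_def Ex_def worder_expressed_def wmajority_expressed_def
      worder_scan_char count_proj)

lemma Ex_sub: "Ex P n l \<subseteq> {i. Pos i \<in> set l}"
proof
  fix i assume "i \<in> Ex P n l"
  then have g: "G P i (proj i l)" by (simp add: Ex_def)
  have "Pos i \<in> set (proj i l)"
  proof (cases P)
    case WORDER then show ?thesis using g by (cases "proj i l") auto
  next
    case WMAJORITY then show ?thesis using g
      by (metis G.simps(2) count_list_0_iff not_one_le_zero)
  qed
  then show "i \<in> {i. Pos i \<in> set l}" by (simp add: proj_def)
qed

lemma Ex_card: "card (Ex P n l) \<le> length l"
proof -
  have "card (Ex P n l) \<le> card {i. Pos i \<in> set l}"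
  proof (rule card_mono)
    show "finite {i. Pos i \<in> set l}"
      by (rule finite_imageD[of Pos]) (auto intro: finite_subset[of _ "set l"] simp: inj_on_def)
  qed (rule Ex_sub)
  also have "\<dots> \<le> card (set l)"
    by (rule card_inj_on_le[of Pos]) (auto simp: inj_on_def)
  also have "\<dots> \<le> length l" by (rule card_length)
  finally show ?thesis .
qed

lemma Ex_local:
  assumes "\<forall>i. i \<noteq> a \<and> i \<noteq> b \<longrightarrow> proj i l = proj i l'"
  shows "Ex P n l - {a,b} = Ex P n l' - {a,b}"
  using assms by (auto simp: Ex_def)

lemma Ex_fin: "finite (Ex P n l)" "Ex P n l \<subseteq> {1..n}"
  by (auto simp: Ex_def)

lemma sum_split:
  fixes w :: "nat \<Rightarrow> real"
  assumes "finite A"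
  shows "sum w A = sum w (A - {a,b}) + (if a \<in> A then w a else 0) + (if b \<in> A \<and> b \<noteq> a then w b else 0)"
proof -
  have 1: "sum w A = sum w (A - {a}) + (if a \<in> A then w a else 0)"
    using assms by (cases "a \<in> A") (auto simp: sum.remove)
  have 2: "sum w (A - {a}) = sum w (A - {a} - {b}) + (if b \<in> A \<and> b \<noteq> a then w b else 0)"
    using assms by (cases "b \<in> A \<and> b \<noteq> a") (auto simp: sum.remove)
  have "A - {a} - {b} = A - {a,b}" by auto
  then show ?thesis using 1 2 by simp
qed

lemma card_split:
  assumes "finite A"
  shows "card A = card (A - {a,b}) + (if a \<in> A then 1 else 0) + (if b \<in> A \<and> b \<noteq> a then 1 else 0)"
proof -
  have 1: "card A = card (A - {a}) + (if a \<in> A then 1 else 0)"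
    using assms using card_Suc_Diff1[of A a] by (cases "a \<in> A") (simp_all del: card_Diff_insert)
  have 2: "card (A - {a}) = card (A - {a} - {b}) + (if b \<in> A \<and> b \<noteq> a then 1 else 0)"
    using assms using card_Suc_Diff1[of "A - {a}" b] by (cases "b \<in> A \<and> b \<noteq> a") (simp_all del: card_Diff_insert)
  have "A - {a} - {b} = A - {a,b}" by auto
  then show ?thesis using 1 2 by simp
qed

lemma two_change:
  fixes w :: "nat \<Rightarrow> real"
  assumes fA: "finite A" and fB: "finite B" and sA: "A \<subseteq> {1..n}" and sB: "B \<subseteq> {1..n}"
    and pos: "\<forall>i\<in>{1..n}. w i > 0"
    and eq: "A - {a,b} = B - {a,b}"
  shows "sum w A \<le> sum w B \<Longrightarrow> int (card A) \<le> int (card B)"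
    and "sum w A < sum w B \<Longrightarrow> a = b \<Longrightarrow> int (card A) + 1 \<le> int (card B)"
    and "a = b \<Longrightarrow> int (card A) \<le> int (card B) + 1"
proof -
  have wa: "a \<in> A \<or> a \<in> B \<Longrightarrow> w a > 0" using sA sB pos by auto
  have wb: "b \<in> A \<or> b \<in> B \<Longrightarrow> w b > 0" using sA sB pos by auto
  note s = sum_split[OF fA, of w a b] sum_split[OF fB, of w a b]
  note c = card_split[OF fA, of a b] card_split[OF fB, of a b]
  have e1: "sum w (A - {a,b}) = sum w (B - {a,b})" "card (A - {a,b}) = card (B - {a,b})"
    using eq by simp_all
  define x where "x = sum w (A - {a,b})"
  define y where "y = card (A - {a,b})"
  have s': "sum w A = x + (if a \<in> A then w a else 0) + (if b \<in> A \<and> b \<noteq> a then w b else 0)"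
     "sum w B = x + (if a \<in> B then w a else 0) + (if b \<in> B \<and> b \<noteq> a then w b else 0)"
    using s e1 by (simp_all add: x_def)
  have c': "card A = y + (if a \<in> A then 1 else 0) + (if b \<in> A \<and> b \<noteq> a then 1 else 0)"
     "card B = y + (if a \<in> B then 1 else 0) + (if b \<in> B \<and> b \<noteq> a then 1 else 0)"
    using c e1 by (simp_all add: y_def)
  show "sum w A \<le> sum w B \<Longrightarrow> int (card A) \<le> int (card B)"
    unfolding s' c' using wa wb
    by (cases "a \<in> A"; cases "a \<in> B"; cases "b \<in> A"; cases "b \<in> B"; cases "b = a"; simp)
  show "sum w A < sum w B \<Longrightarrow> a = b \<Longrightarrow> int (card A) + 1 \<le> int (card B)"
    unfolding s' c' using wa wb
    by (cases "a \<in> A"; cases "a \<in> B"; simp)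
  show "a = b \<Longrightarrow> int (card A) \<le> int (card B) + 1"
    unfolding c' by (cases "a \<in> A"; cases "a \<in> B"; simp)
qed

lemma subst_leaves: "subst_b n t t' \<Longrightarrow> \<exists>xs ys a b. leaves t = xs @ [a] @ ys \<and> leaves t' = xs @ [b] @ ys"
proof (induction rule: subst_b.induct)
  case (1 u a) then show ?case by (metis append.left_neutral append.right_neutral leaves.simps(1))
next
  case (2 l l' r) then show ?case by (metis append.assoc leaves.simps(2))
next
  case (3 r r' l) then show ?case by (metis append.assoc leaves.simps(2))
qed

lemma insert_leaves: "insert_b n t t' \<Longrightarrow> \<exists>xs ys u. leaves t = xs @ ys \<and> leaves t' = xs @ [u] @ ys"
proof (induction rule: insert_b.induct)
  case (1 u v) then show ?case by (metis append.left_neutral append_Cons leaves.simps)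
next
  case (2 u v) then show ?case by (metis append.right_neutral leaves.simps)
next
  case (3 l l' r) then show ?case by (metis append.assoc leaves.simps(2))
next
  case (4 r r' l) then show ?case by (metis append.assoc leaves.simps(2))
qed

lemma delete_leaves: "delete_b t t' \<Longrightarrow> \<exists>xs ys a. leaves t = xs @ [a] @ ys \<and> leaves t' = xs @ ys"
proof (induction rule: delete_b.induct)
  case (1 a r) then show ?case by (metis append.left_neutral append_Cons leaves.simps)
next
  case (2 l a) then show ?case by (metis append.right_neutral leaves.simps)
next
  case (3 l l' r) then show ?case by (metis append.assoc leaves.simps(2))
next
  case (4 r r' l) then show ?case by (metis append.assoc leaves.simps(2))
qed

lemma bsize_leaves: "bsize t = 2 * length (leaves t) - 1 \<and> length (leaves t) \<ge> 1"
  by (induction t) auto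

lemma complexity_leaves: "complexity X = 2 * num_leaves X - 1"
  using bsize_leaves by (cases X) (auto simp: complexity_def num_leaves_def leaf_list_def)

lemma some_leaves: "X \<noteq> None \<Longrightarrow> num_leaves X \<ge> 1"
  using bsize_leaves by (cases X) (auto simp: num_leaves_def leaf_list_def)

lemma mutate_cases:
  assumes "mutate1 n X Y"
  shows "(\<exists>xs ys a b. leaf_list X = xs @ [a] @ ys \<and> leaf_list Y = xs @ [b] @ ys)
       \<or> (\<exists>xs ys u. leaf_list X = xs @ ys \<and> leaf_list Y = xs @ [u] @ ys)
       \<or> (\<exists>xs ys a. leaf_list X = xs @ [a] @ ys \<and> leaf_list Y = xs @ ys)
       \<or> leaf_list X = leaf_list Y"
  using assms
proof cases
  case (subst t t') then show ?thesis using subst_leaves by (simp add: leaf_list_def)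
next
  case (ins t t') then show ?thesis using insert_leaves by (simp add: leaf_list_def)
next
  case (ins_empty u) then show ?thesis
    by (simp add: leaf_list_def)
next
  case (del t t') then show ?thesis using delete_leaves by (simp add: leaf_list_def)
next
  case (del_single a) then show ?thesis
    by (simp add: leaf_list_def)
next
  case noop_empty then show ?thesis
    by (simp add: leaf_list_def)
qed

lemma step_mono:
  assumes pos: "\<forall>i\<in>{1..n}. w i > 0" and st: "gp_step P n w X X'"
  shows "fitness P n w X \<le> fitness P n w X' \<and>
    int (num_leaves X') - int (card (expressed P n X')) \<le> int (num_leaves X) - int (card (expressed P n X))"
proof -
  obtain Y where m: "mutate1 n X Y" and X': "X' = (if accept P n w X Y then Y else X)"
    using st by (auto simp: gp_step_def)
  show ?thesis
  proof (cases "accept P n w X Y")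
    case False then show ?thesis using X' by simp
  next
    case True
    then have X'Y: "X' = Y" using X' by simp
    define A where "A = Ex P n (leaf_list X)"
    define B where "B = Ex P n (leaf_list Y)"
    have F: "fitness P n w X = sum w A" "fitness P n w Y = sum w B"
      by (simp_all add: fitness_def expressed_Ex A_def B_def)
    have K: "expressed P n X = A" "expressed P n Y = B"
      by (simp_all add: expressed_Ex A_def B_def)
    have fin: "finite A" "finite B" "A \<subseteq> {1..n}" "B \<subseteq> {1..n}"
      unfolding A_def B_def by (rule Ex_fin)+
    have acc: "sum w A < sum w B \<or> (sum w A = sum w B \<and> complexity Y \<le> complexity X)"
      using True F by (auto simp: accept_def)
    then have ge: "sum w A \<le> sum w B" by auto
    from mutate_cases[OF m] show ?thesis
    proof (elim disjE exE conjE)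
      fix xs ys a b assume l: "leaf_list X = xs @ [a] @ ys" "leaf_list Y = xs @ [b] @ ys"
      have "A - {var a, var b} = B - {var a, var b}" unfolding A_def B_def
        by (rule Ex_local) (auto simp: l proj_def)
      from two_change(1)[OF fin pos this ge]
      show ?thesis using X'Y F K ge by (simp add: num_leaves_def l)
    next
      fix xs ys u assume l: "leaf_list X = xs @ ys" "leaf_list Y = xs @ [u] @ ys"
      have "A - {var u, var u} = B - {var u, var u}" unfolding A_def B_def
        by (rule Ex_local) (auto simp: l proj_def)
      moreover have "complexity Y > complexity X"
        by (simp add: complexity_leaves num_leaves_def l)
      then have "sum w A < sum w B" using acc by auto
      ultimately have "int (card A) + 1 \<le> int (card B)" using two_change(2)[OF fin pos] by blast
      then show ?thesis using X'Y F K ge by (simp add: num_leaves_def l)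
    next
      fix xs ys a assume l: "leaf_list X = xs @ [a] @ ys" "leaf_list Y = xs @ ys"
      have "A - {var a, var a} = B - {var a, var a}" unfolding A_def B_def
        by (rule Ex_local) (auto simp: l proj_def)
      then have "int (card A) \<le> int (card B) + 1" using two_change(3)[OF fin pos] by blast
      then show ?thesis using X'Y F K ge by (simp add: num_leaves_def l)
    next
      assume "leaf_list X = leaf_list Y"
      then show ?thesis using X'Y F K ge by (simp add: num_leaves_def A_def B_def)
    qed
  qed
qed

lemma k_le_s: "card (expressed P n X) \<le> num_leaves X"
  by (simp add: expressed_Ex num_leaves_def Ex_card)

lemma nr_iff: "non_redundant P n X \<longleftrightarrow> int (num_leaves X) - int (card (expressed P n X)) = 0"
proof (cases "X = None")
  case True
  then have "num_leaves X = 0" by (simp add: num_leaves_def leaf_list_def)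
  then show ?thesis using True k_le_s[of P n X] by (simp add: non_redundant_def)
next
  case False
  then show ?thesis using some_leaves[OF False] complexity_leaves[of X]
    by (auto simp: non_redundant_def)
qed

theorem mainTheorem4:
  fixes P :: problem and n :: nat and w :: "nat \<Rightarrow> real" and run :: "nat \<Rightarrow> tree"
  assumes "n \<ge> 1"
    and "\<forall>i \<in> {1..n}. w i > 0"
    and "\<forall>i j. 1 \<le> i \<longrightarrow> i \<le> j \<longrightarrow> j \<le> n \<longrightarrow> w j \<le> w i"
    and "valid_tree n (run 0)"
    and "\<forall>t. gp_step P n w (run t) (run (Suc t))"
  shows "(\<forall>t. fitness P n w (run t) \<le> fitness P n w (run (Suc t))
             \<and> int (num_leaves (run (Suc t))) - int (card (expressed P n (run (Suc t))))
                 \<le> int (num_leaves (run t)) - int (card (expressed P n (run t)))) \<and>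
         (\<forall>t t'. t \<le> t' \<longrightarrow> non_redundant P n (run t) \<longrightarrow> non_redundant P n (run t'))"
proof -
  define d where "d t = int (num_leaves (run t)) - int (card (expressed P n (run t)))" for t
  have S: "\<forall>t. fitness P n w (run t) \<le> fitness P n w (run (Suc t))
             \<and> int (num_leaves (run (Suc t))) - int (card (expressed P n (run (Suc t))))
                 \<le> int (num_leaves (run t)) - int (card (expressed P n (run t)))"
    using step_mono assms(2,5) by blast
  have dm: "t \<le> t' \<Longrightarrow> d t' \<le> d t" for t t'
  proof (induction t' rule: dec_induct)
    case base then show ?case by simp
  next
    case (step m) then show ?case using S by (smt (verit) d_def)
  qed
  have dnn: "d t \<ge> 0" for t using k_le_s[of P n "run t"] by (simp add: d_def)
  have "\<forall>t t'. t \<le> t' \<longrightarrow> non_redundant P n (run t) \<longrightarrow> non_redundant P n (run t')"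
  proof (intro allI impI)
    fix t t' assume "t \<le> t'" "non_redundant P n (run t)"
    then have "d t = 0" by (simp add: nr_iff d_def)
    then have "d t' = 0" using dm[OF \<open>t \<le> t'\<close>] dnn[of t'] by simp
    then show "non_redundant P n (run t')" by (simp add: nr_iff d_def)
  qed
  with S show ?thesis by blast
qed

end
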